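(* Let $\lambda_0,\lambda_1>0$, and let $\boldsymbol\alpha_0^\star$ and $\boldsymbol\alpha_1^\star$ be the optimal solutions of the dual problems $\max_{\boldsymbol\alpha\ge\mathbf0}D_{\lambda_0}(\boldsymbol\alpha)$ and $\max_{\boldsymbol\alpha\ge\mathbf0}D_{\lambda_1}(\boldsymbol\alpha)$, respectively. Then $$\Big\|\boldsymbol\alpha_1^\star-\frac{\lambda_0+\lambda_1}{2\lambda_0}\boldsymbol\alpha_0^\star\Big\|_2^2\le\Big\|\frac{\lambda_0-\lambda_1}{2\lambda_0}\boldsymbol\alpha_0^\star\Big\|_2^2.$$
   Context: Let $n,K,p\ge1$ be integers, $[n]=\{1,\dots,n\}$. For each $i\in[n]$ let $\mathbf x_i\in\mathbb R^p$ have nonnegative entries and let $\mathcal D_i,\mathcal S_i\subseteq[n]$ be sets of size $K$. Put $\mathbf c_{ij}=(\mathbf x_i-\mathbf x_j)\circ(\mathbf x_i-\mathbf x_j)$ (entrywise product). Vectors in $\mathbb R^{2nK}$ are indexed by the pairs $(i,l)$, $l\in\mathcal D_i$ ("different-class pairs") and $(i,j)$, $j\in\mathcal S_i$ ("same-class pairs"). $\mathbf C\in\mathbb R^{p\times2nK}$ has column $\mathbf c_{il}$ for each different-class pair and $-\mathbf c_{ij}$ for each same-class pair. Fix $L\ge U\ge0$, $\eta>0$; let $\mathbf t\in\mathbb R^{2nK}$ have entry $L$ at different-class pairs and $-U$ at same-class pairs; $[z]_+=\max\{z,0\}$ entrywise; $\mathbf 1$ the all-ones vector. For $\lambda>0$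 and $\boldsymbol\alpha\in\mathbb R^{2nK}_{\ge0}$ define $$D_\lambda(\boldsymbol\alpha)=-\frac14\|\boldsymbol\alpha\|_2^2+\mathbf t^\top\boldsymbol\alpha-\frac{\lambda\eta}{2}\|\mathbf m_\lambda(\boldsymbol\alpha)\|_2^2,\qquad\mathbf m_\lambda(\boldsymbol\alpha)=\frac{1}{\lambda\eta}[\mathbf C\boldsymbol\alpha-\lambda\mathbf1]_+.$$ This is the dual of the primal problem $\min_{\mathbf m\ge\mathbf0}\sum_{i}\big[\sum_{l\in\mathcal D_i}([L-\mathbf m^\top\mathbf c_{il}]_+)^2+\sum_{j\in\mathcal S_i}([-U+\mathbf m^\top\mathbf c_{ij}]_+)^2\big]+\lambda(\mathbf m^\top\mathbf1+\frac\eta2\|\mathbf m\|_2^2)$. *)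

theory Defs
  imports "HOL-Analysis.Analysis"
begin

text \<open>Index set of R^{2nK}: a triple (i, j, True) is the different-class pair (i,j) with
  j in D i; a triple (i, j, False) is the same-class pair (i,j) with j in S i.
  Vectors in R^{2nK} are functions on triples, considered on this index set.\<close>
definition pairs :: "nat \<Rightarrow> (nat \<Rightarrow> nat set) \<Rightarrow> (nat \<Rightarrow> nat set) \<Rightarrow> (nat \<times> nat \<times> bool) set" where
  "pairs n D S = {(i, j, True) | i j. i \<in> {1..n} \<and> j \<in> D i}
               \<union> {(i, j, False) | i j. i \<in> {1..n} \<and> j \<in> S i}"

definition cvec :: "(nat \<Rightarrow> nat \<Rightarrow> real) \<Rightarrow> nat \<Rightarrow> nat \<Rightarrow> nat \<Rightarrow> real" where
  "cvec x i j k = (x i k - x j k) * (x i k - x j k)"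

definition Ccol :: "(nat \<Rightarrow> nat \<Rightarrow> real) \<Rightarrow> nat \<times> nat \<times> bool \<Rightarrow> nat \<Rightarrow> real" where
  "Ccol x q k = (case q of (i, j, b) \<Rightarrow> if b then cvec x i j k else - cvec x i j k)"

definition Cmul :: "(nat \<Rightarrow> nat \<Rightarrow> real) \<Rightarrow> (nat \<times> nat \<times> bool) set \<Rightarrow> (nat \<times> nat \<times> bool \<Rightarrow> real) \<Rightarrow> nat \<Rightarrow> real" where
  "Cmul x P \<alpha> k = (\<Sum>q\<in>P. Ccol x q k * \<alpha> q)"

definition tvec :: "real \<Rightarrow> real \<Rightarrow> nat \<times> nat \<times> bool \<Rightarrow> real" where
  "tvec L U q = (case q of (i, j, b) \<Rightarrow> if b then L else - U)"

definition mvec :: "(nat \<Rightarrow> nat \<Rightarrow> real) \<Rightarrow> (nat \<times> nat \<times> bool) set \<Rightarrow> real \<Rightarrow> real \<Rightarrow> (nat \<times> nat \<times> bool \<Rightarrow> real) \<Rightarrow> nat \<Rightarrow> real" where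
  "mvec x P eta lam \<alpha> k = (1 / (lam * eta)) * max (Cmul x P \<alpha> k - lam) 0"

definition Dual :: "nat \<Rightarrow> nat \<Rightarrow> (nat \<Rightarrow> nat set) \<Rightarrow> (nat \<Rightarrow> nat set) \<Rightarrow> (nat \<Rightarrow> nat \<Rightarrow> real)
    \<Rightarrow> real \<Rightarrow> real \<Rightarrow> real \<Rightarrow> real \<Rightarrow> (nat \<times> nat \<times> bool \<Rightarrow> real) \<Rightarrow> real" where
  "Dual n p D S x L U eta lam \<alpha> =
     (let P = pairs n D S in
      - (1/4) * (\<Sum>q\<in>P. (\<alpha> q)\<^sup>2) + (\<Sum>q\<in>P. tvec L U q * \<alpha> q)
      - (lam * eta / 2) * (\<Sum>k<p. (mvec x P eta lam \<alpha> k)\<^sup>2))"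

definition feasible :: "(nat \<times> nat \<times> bool) set \<Rightarrow> (nat \<times> nat \<times> bool \<Rightarrow> real) \<Rightarrow> bool" where
  "feasible P \<alpha> \<longleftrightarrow> (\<forall>q\<in>P. 0 \<le> \<alpha> q) \<and> (\<forall>q. q \<notin> P \<longrightarrow> \<alpha> q = 0)"

definition dual_optimal :: "nat \<Rightarrow> nat \<Rightarrow> (nat \<Rightarrow> nat set) \<Rightarrow> (nat \<Rightarrow> nat set) \<Rightarrow> (nat \<Rightarrow> nat \<Rightarrow> real)
    \<Rightarrow> real \<Rightarrow> real \<Rightarrow> real \<Rightarrow> real \<Rightarrow> (nat \<times> nat \<times> bool \<Rightarrow> real) \<Rightarrow> bool" where
  "dual_optimal n p D S x L U eta lam \<alpha> \<longleftrightarrow>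
     feasible (pairs n D S) \<alpha> \<and>
     (\<forall>\<beta>. feasible (pairs n D S) \<beta> \<longrightarrow> Dual n p D S x L U eta lam \<beta> \<le> Dual n p D S x L U eta lam \<alpha>)"

end

theory Submission
  imports Defs
begin

lemma limit_aux:
  fixes X c :: real
  assumes "c \<ge> 0" and h: "\<And>s. 0 < s \<Longrightarrow> s < 1 \<Longrightarrow> X + c * (1 - s) \<le> 0"
  shows "X + c \<le> 0"
proof (rule ccontr)
  assume "\<not> X + c \<le> 0"
  then have e: "X + c > 0" by simp
  show False
  proof (cases "c = 0")
    case True
    with h[of "1/2"] e show False by simp
  next
    case False
    with assms have c: "c > 0" by simp
    define s where "s = min (1/2) ((X + c) / (2 * c))"
    have s0: "0 < s" using e c by (simp add: s_def)
    have s1: "s < 1" by (simp add: s_def)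
    have "c * s \<le> (X + c) / 2" using c
      by (simp add: s_def min_def field_simps)
    with h[OF s0 s1] e show False by (simp add: algebra_simps)
  qed
qed

lemma maxsq_convex:
  fixes u v s :: real
  assumes "0 \<le> s" "s \<le> 1"
  shows "(max ((1 - s) * u + s * v - 1) 0)\<^sup>2 \<le> (1 - s) * (max (u - 1) 0)\<^sup>2 + s * (max (v - 1) 0)\<^sup>2"
proof -
  let ?a = "max (u - 1) 0" and ?b = "max (v - 1) 0"
  have w: "(1 - s) * u + s * v - 1 = (1 - s) * (u - 1) + s * (v - 1)" by (simp add: algebra_simps)
  have "max ((1 - s) * u + s * v - 1) 0 \<le> (1 - s) * ?a + s * ?b"
  proof -
    have 1: "(1 - s) * (u - 1) \<le> (1 - s) * ?a" using assms by (intro mult_left_mono) auto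
    have 2: "s * (v - 1) \<le> s * ?b" using assms by (intro mult_left_mono) auto
    have 3: "0 \<le> (1 - s) * ?a" "0 \<le> s * ?b" using assms by auto
    show ?thesis unfolding w using 1 2 3 by linarith
  qed
  moreover have "0 \<le> max ((1 - s) * u + s * v - 1) 0" by simp
  ultimately have "(max ((1 - s) * u + s * v - 1) 0)\<^sup>2 \<le> ((1 - s) * ?a + s * ?b)\<^sup>2"
    by (simp add: power_mono)
  also have "\<dots> \<le> (1 - s) * ?a\<^sup>2 + s * ?b\<^sup>2"
  proof -
    have "(1 - s) * ?a\<^sup>2 + s * ?b\<^sup>2 - ((1 - s) * ?a + s * ?b)\<^sup>2 = s * (1 - s) * (?a - ?b)\<^sup>2"
      by (simp add: power2_eq_square algebra_simps)
    moreover have "s * (1 - s) * (?a - ?b)\<^sup>2 \<ge> 0" using assms by simp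
    ultimately show ?thesis by linarith
  qed
  finally show ?thesis .
qed

lemma sq_comb: "((1 - s) * a + s * b)\<^sup>2 = (1 - s) * a\<^sup>2 + s * b\<^sup>2 - s * (1 - s) * (b - a)\<^sup>2"
  for a b s :: real
  by (simp add: power2_eq_square algebra_simps)

context
  fixes P :: "(nat \<times> nat \<times> bool) set" and x :: "nat \<Rightarrow> nat \<Rightarrow> real" and p :: nat
    and L U eta :: real
begin

definition "NN (\<beta> :: nat \<times> nat \<times> bool \<Rightarrow> real) = (\<Sum>q\<in>P. (\<beta> q)\<^sup>2)"
definition "TT \<beta> = (\<Sum>q\<in>P. tvec L U q * \<beta> q)"
definition "HH \<beta> = (\<Sum>k<p. (max (Cmul x P \<beta> k - 1) 0)\<^sup>2)"
definition "Phi lam \<beta> = - lam / 4 * NN \<beta> + TT \<beta> - HH \<beta> / (2 * eta)"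

lemma Cmul_comb:
  "Cmul x P (\<lambda>q. (1 - s) * a q + s * b q) k = (1 - s) * Cmul x P a k + s * Cmul x P b k"
proof -
  have "Cmul x P (\<lambda>q. (1 - s) * a q + s * b q) k = (\<Sum>q\<in>P. (1 - s) * (Ccol x q k * a q) + s * (Ccol x q k * b q))"
    unfolding Cmul_def by (rule sum.cong) (simp_all add: algebra_simps)
  then show ?thesis unfolding Cmul_def by (simp add: sum.distrib sum_distrib_left)
qed

lemma Cmul_scale:
  "Cmul x P (\<lambda>q. c * a q) k = c * Cmul x P a k"
  unfolding Cmul_def by (simp add: algebra_simps sum_distrib_left)

lemma HH_convex:
  assumes "0 \<le> s" "s \<le> 1"
  shows "HH (\<lambda>q. (1 - s) * a q + s * b q) \<le> (1 - s) * HH a + s * HH b"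
  unfolding HH_def Cmul_comb
  by (simp add: sum_distrib_left sum.distrib[symmetric] sum_mono maxsq_convex assms)

lemma NN_comb:
  "NN (\<lambda>q. (1 - s) * a q + s * b q) = (1 - s) * NN a + s * NN b - s * (1 - s) * NN (\<lambda>q. b q - a q)"
proof -
  have "NN (\<lambda>q. (1 - s) * a q + s * b q) = (\<Sum>q\<in>P. (1 - s) * (a q)\<^sup>2 + s * (b q)\<^sup>2 - s * (1 - s) * (b q - a q)\<^sup>2)"
    unfolding NN_def sq_comb by (rule refl)
  then show ?thesis
    unfolding NN_def by (simp add: sum.distrib sum_subtractf sum_distrib_left)
qed

lemma TT_comb:
  "TT (\<lambda>q. (1 - s) * a q + s * b q) = (1 - s) * TT a + s * TT b"
proof -
  have "TT (\<lambda>q. (1 - s) * a q + s * b q) = (\<Sum>q\<in>P. (1 - s) * (tvec L U q * a q) + s * (tvec L U q * b q))"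
    unfolding TT_def by (rule sum.cong) (simp_all add: algebra_simps)
  then show ?thesis unfolding TT_def by (simp add: sum.distrib sum_distrib_left)
qed

lemma Phi_strong:
  assumes "0 \<le> s" "s \<le> 1" "eta > 0"
  shows "Phi lam (\<lambda>q. (1 - s) * a q + s * b q) \<ge>
     (1 - s) * Phi lam a + s * Phi lam b + lam / 4 * s * (1 - s) * NN (\<lambda>q. b q - a q)"
proof -
  have "HH (\<lambda>q. (1 - s) * a q + s * b q) / (2 * eta) \<le> ((1 - s) * HH a + s * HH b) / (2 * eta)"
    using HH_convex[OF assms(1,2)] assms(3) by (simp add: divide_right_mono)
  also have "\<dots> = (1 - s) * (HH a / (2 * eta)) + s * (HH b / (2 * eta))"
    by (simp add: add_divide_distrib)
  finally have hh: "HH (\<lambda>q. (1 - s) * a q + s * b q) / (2 * eta) \<le> (1 - s) * (HH a / (2 * eta)) + s * (HH b / (2 * eta))" .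
  have e: "(1 - s) * Phi lam a + s * Phi lam b + lam / 4 * s * (1 - s) * NN (\<lambda>q. b q - a q)
     = - lam / 4 * ((1 - s) * NN a + s * NN b - s * (1 - s) * NN (\<lambda>q. b q - a q))
       + ((1 - s) * TT a + s * TT b) - ((1 - s) * (HH a / (2 * eta)) + s * (HH b / (2 * eta)))"
    unfolding Phi_def using assms(3) by (simp add: field_simps)
  show ?thesis unfolding e unfolding Phi_def NN_comb TT_comb using hh by linarith
qed

lemma feasible_comb:
  assumes "feasible P a" "feasible P b" "0 \<le> s" "s \<le> 1"
  shows "feasible P (\<lambda>q. (1 - s) * a q + s * b q)"
  using assms unfolding feasible_def by auto

lemma feasible_scale:
  assumes "feasible P a" "0 \<le> c"
  shows "feasible P (\<lambda>q. c * a q)"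
  using assms unfolding feasible_def by auto

lemma opt_ineq:
  assumes "eta > 0" "lam > 0" "feasible P b0" "feasible P b1"
    and opt: "\<And>\<beta>. feasible P \<beta> \<Longrightarrow> Phi lam \<beta> \<le> Phi lam b0"
  shows "Phi lam b1 - Phi lam b0 + lam / 4 * NN (\<lambda>q. b1 q - b0 q) \<le> 0"
proof (rule limit_aux)
  show "0 \<le> lam / 4 * NN (\<lambda>q. b1 q - b0 q)" using assms unfolding NN_def by (simp add: sum_nonneg)
  fix s :: real assume s: "0 < s" "s < 1"
  have "(1 - s) * Phi lam b0 + s * Phi lam b1 + lam / 4 * s * (1 - s) * NN (\<lambda>q. b1 q - b0 q)
        \<le> Phi lam b0"
    using Phi_strong[of s lam b0 b1] opt[OF feasible_comb[OF assms(3,4), of s]] s assms(1) by simp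
  then have "s * (Phi lam b1 - Phi lam b0 + lam / 4 * NN (\<lambda>q. b1 q - b0 q) * (1 - s)) \<le> 0"
    by (simp add: algebra_simps)
  then show "Phi lam b1 - Phi lam b0 + lam / 4 * NN (\<lambda>q. b1 q - b0 q) * (1 - s) \<le> 0"
    using s by (simp add: mult_le_0_iff)
qed

lemma Dual_scale:
  assumes "P = pairs n D S" "eta > 0" "lam > 0"
  shows "Dual n p D S x L U eta lam (\<lambda>q. lam * \<beta> q) = lam * Phi lam \<beta>"
proof -
  have m: "mvec x P eta lam (\<lambda>q. lam * \<beta> q) k = max (Cmul x P \<beta> k - 1) 0 / eta" for k
  proof -
    have "max (lam * Cmul x P \<beta> k - lam) 0 = lam * max (Cmul x P \<beta> k - 1) 0"
      using assms(3) by (simp add: max_def algebra_simps)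
    then show ?thesis unfolding mvec_def Cmul_scale using assms(2,3) by simp
  qed
  have h: "(lam * eta / 2) * (\<Sum>k<p. (mvec x P eta lam (\<lambda>q. lam * \<beta> q) k)\<^sup>2) = lam * (HH \<beta> / (2 * eta))"
    unfolding m HH_def using assms(2)
    by (simp add: power_divide sum_divide_distrib[symmetric] power2_eq_square field_simps)
  have n: "(\<Sum>q\<in>P. (lam * \<beta> q)\<^sup>2) = lam\<^sup>2 * NN \<beta>"
    unfolding NN_def by (simp add: power_mult_distrib sum_distrib_left)
  have t: "(\<Sum>q\<in>P. tvec L U q * (lam * \<beta> q)) = lam * TT \<beta>"
    unfolding TT_def by (simp add: sum_distrib_left algebra_simps)
  show ?thesis
    unfolding Dual_def Let_def assms(1)[symmetric] h n t Phi_def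
    by (simp add: power2_eq_square algebra_simps)
qed

lemma opt_Phi:
  assumes "P = pairs n D S" "eta > 0" "lam > 0" "dual_optimal n p D S x L U eta lam \<alpha>"
  shows "feasible P (\<lambda>q. \<alpha> q / lam)"
    and "\<And>\<beta>. feasible P \<beta> \<Longrightarrow> Phi lam \<beta> \<le> Phi lam (\<lambda>q. \<alpha> q / lam)"
proof -
  have fa: "feasible P \<alpha>" and opt: "\<And>\<beta>. feasible P \<beta> \<Longrightarrow> Dual n p D S x L U eta lam \<beta> \<le> Dual n p D S x L U eta lam \<alpha>"
    using assms(1,4) unfolding dual_optimal_def by auto
  show "feasible P (\<lambda>q. \<alpha> q / lam)"
    using feasible_scale[OF fa, of "1 / lam"] assms(3) by simp
  have a: "\<alpha> = (\<lambda>q. lam * (\<alpha> q / lam))" using assms(3) by auto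
  fix \<beta> assume "feasible P \<beta>"
  then have "Dual n p D S x L U eta lam (\<lambda>q. lam * \<beta> q) \<le> Dual n p D S x L U eta lam (\<lambda>q. lam * (\<alpha> q / lam))"
    using opt[OF feasible_scale[of \<beta> lam]] assms(3) a by simp
  then have "lam * Phi lam \<beta> \<le> lam * Phi lam (\<lambda>q. \<alpha> q / lam)"
    unfolding Dual_scale[OF assms(1-3)] .
  then show "Phi lam \<beta> \<le> Phi lam (\<lambda>q. \<alpha> q / lam)" using assms(3) by simp
qed

lemma pt_id:
  fixes l0 l1 u v :: real
  assumes "l0 \<noteq> 0"
  shows "(l1 * v - (l0 + l1) / (2 * l0) * (l0 * u))\<^sup>2 - ((l0 - l1) / (2 * l0) * (l0 * u))\<^sup>2
     = l1 * (l1 * v\<^sup>2 - (l0 + l1) * (u * v) + l0 * u\<^sup>2)"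
  using assms by (simp add: power2_eq_square field_simps)

lemma main_ctx:
  assumes "P = pairs n D S" "eta > 0" "lam0 > 0" "lam1 > 0"
    and "dual_optimal n p D S x L U eta lam0 \<alpha>0"
    and "dual_optimal n p D S x L U eta lam1 \<alpha>1"
  shows "(\<Sum>q\<in>P. (\<alpha>1 q - (lam0 + lam1) / (2 * lam0) * \<alpha>0 q)\<^sup>2)
         \<le> (\<Sum>q\<in>P. ((lam0 - lam1) / (2 * lam0) * \<alpha>0 q)\<^sup>2)"
proof -
  define b0 where "b0 = (\<lambda>q. \<alpha>0 q / lam0)"
  define b1 where "b1 = (\<lambda>q. \<alpha>1 q / lam1)"
  note o0 = opt_Phi[OF assms(1,2,3,5), folded b0_def]
  note o1 = opt_Phi[OF assms(1,2,4,6), folded b1_def]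
  have i0: "Phi lam0 b1 - Phi lam0 b0 + lam0 / 4 * NN (\<lambda>q. b1 q - b0 q) \<le> 0"
    by (rule opt_ineq[OF assms(2,3) o0(1) o1(1) o0(2)])
  have i1: "Phi lam1 b0 - Phi lam1 b1 + lam1 / 4 * NN (\<lambda>q. b0 q - b1 q) \<le> 0"
    by (rule opt_ineq[OF assms(2,4) o1(1) o0(1) o1(2)])
  define M where "M = (\<Sum>q\<in>P. b0 q * b1 q)"
  have nd: "NN (\<lambda>q. b1 q - b0 q) = NN b1 - 2 * M + NN b0"
  proof -
    have "NN (\<lambda>q. b1 q - b0 q) = (\<Sum>q\<in>P. (b1 q)\<^sup>2 - 2 * (b0 q * b1 q) + (b0 q)\<^sup>2)"
      unfolding NN_def by (rule sum.cong[OF refl]) (simp add: power2_eq_square algebra_simps)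
    then show ?thesis unfolding NN_def M_def by (simp add: sum.distrib sum_subtractf sum_distrib_left)
  qed
  have nd2: "NN (\<lambda>q. b0 q - b1 q) = NN (\<lambda>q. b1 q - b0 q)"
    unfolding NN_def by (rule sum.cong[OF refl]) (simp add: power2_commute)
  have key0: "(lam1 - lam0) / 4 * NN b1 + (lam0 - lam1) / 4 * NN b0 + (lam0 + lam1) / 4 * NN (\<lambda>q. b1 q - b0 q) \<le> 0"
  proof -
    have "(lam1 - lam0) / 4 * NN b1 + (lam0 - lam1) / 4 * NN b0 + (lam0 + lam1) / 4 * NN (\<lambda>q. b1 q - b0 q)
      = (Phi lam0 b1 - Phi lam0 b0 + lam0 / 4 * NN (\<lambda>q. b1 q - b0 q))
        + (Phi lam1 b0 - Phi lam1 b1 + lam1 / 4 * NN (\<lambda>q. b1 q - b0 q))"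
      unfolding Phi_def by (simp add: algebra_simps diff_divide_distrib add_divide_distrib)
    then show ?thesis using i0 i1 unfolding nd2 by linarith
  qed
  have key: "lam1 * NN b1 - (lam0 + lam1) * M + lam0 * NN b0 \<le> 0"
  proof -
    have "(lam1 - lam0) / 4 * NN b1 + (lam0 - lam1) / 4 * NN b0 + (lam0 + lam1) / 4 * NN (\<lambda>q. b1 q - b0 q)
       = (lam1 * NN b1 - (lam0 + lam1) * M + lam0 * NN b0) / 2"
      unfolding nd by (simp add: field_simps)
    with key0 show ?thesis by simp
  qed
  have inner: "(\<Sum>q\<in>P. lam1 * (b1 q)\<^sup>2 - (lam0 + lam1) * (b0 q * b1 q) + lam0 * (b0 q)\<^sup>2)
      = lam1 * NN b1 - (lam0 + lam1) * M + lam0 * NN b0"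
    unfolding NN_def M_def by (simp add: sum_distrib_left sum_subtractf sum.distrib)
  have a0: "\<alpha>0 q = lam0 * b0 q" for q using assms(3) by (simp add: b0_def)
  have a1: "\<alpha>1 q = lam1 * b1 q" for q using assms(4) by (simp add: b1_def)
  have "(\<Sum>q\<in>P. (\<alpha>1 q - (lam0 + lam1) / (2 * lam0) * \<alpha>0 q)\<^sup>2)
         - (\<Sum>q\<in>P. ((lam0 - lam1) / (2 * lam0) * \<alpha>0 q)\<^sup>2)
       = (\<Sum>q\<in>P. lam1 * (lam1 * (b1 q)\<^sup>2 - (lam0 + lam1) * (b0 q * b1 q) + lam0 * (b0 q)\<^sup>2))"
    unfolding sum_subtractf[symmetric] a0 a1
    by (rule sum.cong[OF refl], rule pt_id) (use assms(3) in simp)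
  also have "\<dots> = lam1 * (\<Sum>q\<in>P. lam1 * (b1 q)\<^sup>2 - (lam0 + lam1) * (b0 q * b1 q) + lam0 * (b0 q)\<^sup>2)"
    by (rule sum_distrib_left[symmetric])
  also have "\<dots> = lam1 * (lam1 * NN b1 - (lam0 + lam1) * M + lam0 * NN b0)"
    using inner by simp
  also have "\<dots> \<le> 0" using key assms(4) by (simp add: mult_le_0_iff)
  finally show ?thesis by simp
qed

end

theorem theorem2:
  fixes n K p :: nat and D S :: "nat \<Rightarrow> nat set" and x :: "nat \<Rightarrow> nat \<Rightarrow> real"
    and L U eta lam0 lam1 :: real and \<alpha>0 \<alpha>1 :: "nat \<times> nat \<times> bool \<Rightarrow> real"
  assumes "n \<ge> 1" and "K \<ge> 1" and "p \<ge> 1"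
    and "\<And>i k. i \<in> {1..n} \<Longrightarrow> k < p \<Longrightarrow> 0 \<le> x i k"
    and "\<And>i. i \<in> {1..n} \<Longrightarrow> D i \<subseteq> {1..n} \<and> card (D i) = K"
    and "\<And>i. i \<in> {1..n} \<Longrightarrow> S i \<subseteq> {1..n} \<and> card (S i) = K"
    and "L \<ge> U" and "U \<ge> 0" and "eta > 0"
    and "lam0 > 0" and "lam1 > 0"
    and "dual_optimal n p D S x L U eta lam0 \<alpha>0"
    and "dual_optimal n p D S x L U eta lam1 \<alpha>1"
  shows "(\<Sum>q\<in>pairs n D S. (\<alpha>1 q - (lam0 + lam1) / (2 * lam0) * \<alpha>0 q)\<^sup>2)
         \<le> (\<Sum>q\<in>pairs n D S. ((lam0 - lam1) / (2 * lam0) * \<alpha>0 q)\<^sup>2)"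
  by (rule main_ctx[OF refl assms(9-13)])

end
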